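(* Let $\Lambda=\{\Lambda_j\}_{j=1}^\infty$ and $\Omega=\{\Omega_j\}_{j=1}^\infty$ be $(C,C')$-controlled $K$-$g$-frames for $\mathcal H$ with respect to $\{\mathcal H_j\}_{j=1}^\infty$ and $\{\mathcal W_j\}_{j=1}^\infty$, respectively. For each $j\in\mathbb N$ let $\{f_{jk}\}_{k\in I_j}$ ($I_j\subseteq\mathbb N$) be a frame for $\mathcal H_j$ with frame bounds $\alpha,\beta$ and $\{g_{jk}\}_{k\in Q_j}$ ($Q_j\subseteq\mathbb N$) a frame for $\mathcal W_j$ with frame bounds $\alpha',\beta'$ (the bounds independent of $j$). Then the following are equivalent: (i) $\Lambda$ and $\Omega$ are $(C,C')$-controlled $K$-$g$-woven; (ii) $\{(CC')^{1/2}\Lambda_j^*f_{jk}\}_{j\in\mathbb N,k\in I_j}$ and $\{(CC')^{1/2}\Omega_j^*g_{jk}\}_{j\in\mathbb N,k\in Q_j}$ are woven $K$-frames for $\mathcal H$, i.e. there are universal constants $0<D_1\le D_2<\infty$ such that for every $\sigma\subseteq\mathbb N$ and all $f\in\mathcal H$, $$D_1\|K^*f\|^2\le\sum_{j\in\sigma}\sum_{k\in I_j}|\langle f,(CC')^{1/2}\Lambda_j^*f_{jk}\rangle|^2+\sum_{j\in\sigma^c}\sum_{k\in Q_j}|\langle f,(CC')^{1/2}\Omega_j^*g_{jk}\rangle|^2\le D_2\|f\|^2.$$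
   Context: $\mathcal H$ is a complex separable Hilbert space, $K\in\mathcal L(\mathcal H)$, $C,C'\in\mathcal{GL}^+(\mathcal H)$ (bounded positive operators with bounded inverse); $\{\mathcal H_j\}$, $\{\mathcal W_j\}$ are sequences of closed subspaces of Hilbert spaces $\mathcal K_1,\mathcal K_2$; $\Lambda_j\in\mathcal L(\mathcal H,\mathcal H_j)$, $\Omega_j\in\mathcal L(\mathcal H,\mathcal W_j)$. Standing assumption: $C$ and $C'$ commute with each other and with every $\Lambda_j^*\Lambda_j$ and $\Omega_j^*\Omega_j$, so $(CC')^{1/2}$ exists and $\langle\Lambda_jCf,\Lambda_jC'f\rangle=\|\Lambda_j(CC')^{1/2}f\|^2$ (similarly for $\Omega_j$). A family $\{\Gamma_j\}$ is a $(C,C')$-controlled $K$-$g$-frame if there are $0<A\le B$ with $A\|K^*f\|^2\le\sum_j\langle\Gamma_jCf,\Gamma_jC'f\rangle\le B\|f\|^2$ for all $f$. $\Lambda,\Omega$ are $(C,C')$-controlled $K$-$g$-woven if there are universal $0<A\le B$ such that for every $\sigma\subseteq\mathbb N$ the family $\{\Lambda_j\}_{j\in\sigma}\cup\{\Omega_j\}_{j\in\sigma^c}$ is a $(C,C')$-controlled $K$-$g$-frame with bounds $A,B$. A sequence $\{h_k\}$ in a Hilbert space $V$ is a frame with bounds $a,b>0$ if $a\|v\|^2\le\sum_k|\langle v,h_k\rangle|^2\le b\|v\|^2$ for all $v\in V$. *)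

theory Defs
  imports "HOL-Analysis.Analysis"
begin

class scaleC = scaleR +
  fixes scaleC :: "complex \<Rightarrow> 'a \<Rightarrow> 'a"
  assumes scaleR_scaleC: "scaleR r = scaleC (complex_of_real r)"

class complex_vector = real_vector + scaleC +
  assumes scaleC_add_right: "scaleC a (x + y) = scaleC a x + scaleC a y"
    and scaleC_add_left: "scaleC (a + b) x = scaleC a x + scaleC b x"
    and scaleC_scaleC: "scaleC a (scaleC b x) = scaleC (a * b) x"
    and scaleC_one: "scaleC 1 x = x"

class complex_normed_vector = complex_vector + real_normed_vector +
  assumes norm_scaleC: "norm (scaleC a x) = cmod a * norm x"

text \<open>Inner product, linear in the first argument, conjugate-linear in the second.\<close>
class complex_inner = complex_normed_vector +
  fixes cinner :: "'a \<Rightarrow> 'a \<Rightarrow> complex"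
  assumes cinner_commute: "cinner x y = cnj (cinner y x)"
    and cinner_add_left: "cinner (x + y) z = cinner x z + cinner y z"
    and cinner_scaleC_left: "cinner (scaleC r x) y = r * cinner x y"
    and cinner_self_real: "cinner x x = complex_of_real (Re (cinner x x))"
    and cinner_self_nonneg: "0 \<le> Re (cinner x x)"
    and cinner_self_eq_zero: "cinner x x = 0 \<longleftrightarrow> x = 0"
    and norm_eq_sqrt_cinner: "norm x = sqrt (Re (cinner x x))"

class chilbert_space = complex_inner + complete_space

definition clinear :: "('a::complex_vector \<Rightarrow> 'b::complex_vector) \<Rightarrow> bool" where
  "clinear T \<longleftrightarrow> (\<forall>x y. T (x + y) = T x + T y) \<and> (\<forall>c x. T (scaleC c x) = scaleC c (T x))"

definition bounded_clinear :: "('a::complex_normed_vector \<Rightarrow> 'b::complex_normed_vector) \<Rightarrow> bool" where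
  "bounded_clinear T \<longleftrightarrow> clinear T \<and> (\<exists>M. \<forall>x. norm (T x) \<le> M * norm x)"

definition adj :: "('a::chilbert_space \<Rightarrow> 'b::chilbert_space) \<Rightarrow> ('b \<Rightarrow> 'a)" where
  "adj T = (SOME S. \<forall>x y. cinner (T x) y = cinner x (S y))"

definition positive_op :: "('a::chilbert_space \<Rightarrow> 'a) \<Rightarrow> bool" where
  "positive_op T \<longleftrightarrow> bounded_clinear T \<and>
     (\<forall>x. cinner (T x) x = complex_of_real (Re (cinner (T x) x)) \<and> 0 \<le> Re (cinner (T x) x))"

definition GL_plus :: "('a::chilbert_space \<Rightarrow> 'a) \<Rightarrow> bool" where
  "GL_plus T \<longleftrightarrow> positive_op T \<and>
     (\<exists>S. bounded_clinear S \<and> S \<circ> T = id \<and> T \<circ> S = id)"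

definition closed_csubspace :: "'a::chilbert_space set \<Rightarrow> bool" where
  "closed_csubspace V \<longleftrightarrow> 0 \<in> V \<and> (\<forall>x\<in>V. \<forall>y\<in>V. x + y \<in> V) \<and>
     (\<forall>c. \<forall>x\<in>V. scaleC c x \<in> V) \<and> closed V"

definition separable_space :: "'a::topological_space itself \<Rightarrow> bool" where
  "separable_space _ \<longleftrightarrow> (\<exists>D::'a set. countable D \<and> closure D = UNIV)"

definition frame_for :: "'a::chilbert_space set \<Rightarrow> (nat \<Rightarrow> 'a) \<Rightarrow> nat set \<Rightarrow> real \<Rightarrow> real \<Rightarrow> bool" where
  "frame_for V h I a b \<longleftrightarrow> 0 < a \<and> 0 < b \<and> (\<forall>k\<in>I. h k \<in> V) \<and>
     (\<forall>v\<in>V. (\<lambda>k. (cmod (cinner v (h k)))\<^sup>2) summable_on I \<and>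
        a * (norm v)\<^sup>2 \<le> (\<Sum>\<^sub>\<infinity>k\<in>I. (cmod (cinner v (h k)))\<^sup>2) \<and>
        (\<Sum>\<^sub>\<infinity>k\<in>I. (cmod (cinner v (h k)))\<^sup>2) \<le> b * (norm v)\<^sup>2)"

text \<open>The controlled K-g-frame inequalities for a family of terms
  \<open>t f j = \<langle>\<Gamma>\<^sub>j C f, \<Gamma>\<^sub>j C' f\<rangle>\<close> (the family may mix \<open>\<Lambda>\<close>'s and \<open>\<Omega>\<close>'s).\<close>
definition ctrl_Kg_ineq ::
  "('h::chilbert_space \<Rightarrow> 'h) \<Rightarrow> real \<Rightarrow> real \<Rightarrow> ('h \<Rightarrow> nat \<Rightarrow> complex) \<Rightarrow> bool" where
  "ctrl_Kg_ineq K A B t \<longleftrightarrow> (\<forall>f. t f summable_on UNIV \<and>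
      A * (norm (adj K f))\<^sup>2 \<le> Re (\<Sum>\<^sub>\<infinity>j. t f j) \<and>
      Re (\<Sum>\<^sub>\<infinity>j. t f j) \<le> B * (norm f)\<^sup>2)"

definition ctrl_Kg_frame ::
  "('h::chilbert_space \<Rightarrow> 'h) \<Rightarrow> ('h \<Rightarrow> 'h) \<Rightarrow> ('h \<Rightarrow> 'h) \<Rightarrow> (nat \<Rightarrow> 'h \<Rightarrow> 'k::chilbert_space) \<Rightarrow> bool" where
  "ctrl_Kg_frame K C C' \<Gamma> \<longleftrightarrow> (\<exists>A B. 0 < A \<and> A \<le> B \<and>
      ctrl_Kg_ineq K A B (\<lambda>f j. cinner (\<Gamma> j (C f)) (\<Gamma> j (C' f))))"

definition ctrl_Kg_woven ::
  "('h::chilbert_space \<Rightarrow> 'h) \<Rightarrow> ('h \<Rightarrow> 'h) \<Rightarrow> ('h \<Rightarrow> 'h) \<Rightarrow>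
   (nat \<Rightarrow> 'h \<Rightarrow> 'k1::chilbert_space) \<Rightarrow> (nat \<Rightarrow> 'h \<Rightarrow> 'k2::chilbert_space) \<Rightarrow> bool" where
  "ctrl_Kg_woven K C C' \<Lambda> \<Omega> \<longleftrightarrow> (\<exists>A B. 0 < A \<and> A \<le> B \<and> (\<forall>\<sigma>::nat set.
      ctrl_Kg_ineq K A B (\<lambda>f j. if j \<in> \<sigma> then cinner (\<Lambda> j (C f)) (\<Lambda> j (C' f))
                                       else cinner (\<Omega> j (C f)) (\<Omega> j (C' f)))))"

definition woven_K_frames ::
  "('h::chilbert_space \<Rightarrow> 'h) \<Rightarrow> (nat \<Rightarrow> nat \<Rightarrow> 'h) \<Rightarrow> (nat \<Rightarrow> nat set) \<Rightarrow>
   (nat \<Rightarrow> nat \<Rightarrow> 'h) \<Rightarrow> (nat \<Rightarrow> nat set) \<Rightarrow> bool" where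
  "woven_K_frames K u I w Q \<longleftrightarrow> (\<exists>D1 D2. 0 < D1 \<and> D1 \<le> D2 \<and> (\<forall>(\<sigma>::nat set) f.
      (\<lambda>(j,k). (cmod (cinner f (u j k)))\<^sup>2) summable_on {(j,k). j \<in> \<sigma> \<and> k \<in> I j} \<and>
      (\<lambda>(j,k). (cmod (cinner f (w j k)))\<^sup>2) summable_on {(j,k). j \<notin> \<sigma> \<and> k \<in> Q j} \<and>
      D1 * (norm (adj K f))\<^sup>2 \<le>
        (\<Sum>\<^sub>\<infinity>(j,k)\<in>{(j,k). j \<in> \<sigma> \<and> k \<in> I j}. (cmod (cinner f (u j k)))\<^sup>2) +
        (\<Sum>\<^sub>\<infinity>(j,k)\<in>{(j,k). j \<notin> \<sigma> \<and> k \<in> Q j}. (cmod (cinner f (w j k)))\<^sup>2) \<and>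
      (\<Sum>\<^sub>\<infinity>(j,k)\<in>{(j,k). j \<in> \<sigma> \<and> k \<in> I j}. (cmod (cinner f (u j k)))\<^sup>2) +
        (\<Sum>\<^sub>\<infinity>(j,k)\<in>{(j,k). j \<notin> \<sigma> \<and> k \<in> Q j}. (cmod (cinner f (w j k)))\<^sup>2)
        \<le> D2 * (norm f)\<^sup>2))"

end

theory Submission
  imports Defs
begin


lemma cinner_zero_left[simp]: "cinner (0::'a::complex_inner) y = 0"
  using cinner_add_left[of "0::'a" 0 y] by simp

lemma cinner_add_right: "cinner (x::'a::complex_inner) (y + z) = cinner x y + cinner x z"
  by (metis cinner_commute cinner_add_left complex_cnj_add)

lemma cinner_zero_right[simp]: "cinner (x::'a::complex_inner) 0 = 0"
  by (metis cinner_commute cinner_zero_left complex_cnj_zero)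

lemma cinner_minus_left: "cinner (- x::'a::complex_inner) y = - cinner x y"
  using cinner_add_left[of x "-x" y] by (simp add: eq_neg_iff_add_eq_0 add.commute)

lemma cinner_diff_left: "cinner (x - z::'a::complex_inner) y = cinner x y - cinner z y"
  using cinner_add_left[of x "-z" y] cinner_minus_left[of z y] by simp

lemma cinner_minus_right: "cinner (x::'a::complex_inner) (- y) = - cinner x y"
  by (metis cinner_commute cinner_minus_left complex_cnj_minus)

lemma cinner_diff_right: "cinner (x::'a::complex_inner) (y - z) = cinner x y - cinner x z"
  by (metis cinner_commute cinner_diff_left complex_cnj_diff)

lemma cinner_scaleC_right: "cinner (x::'a::complex_inner) (scaleC r y) = cnj r * cinner x y"
  by (metis cinner_commute cinner_scaleC_left complex_cnj_mult)

lemma cinner_scaleR_left: "cinner (scaleR r x::'a::complex_inner) y = of_real r * cinner x y"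
  by (simp add: scaleR_scaleC cinner_scaleC_left)

lemma cinner_scaleR_right: "cinner (x::'a::complex_inner) (scaleR r y) = of_real r * cinner x y"
  by (simp add: scaleR_scaleC cinner_scaleC_right)

lemma norm_sq_cinner: "(norm (x::'a::complex_inner))\<^sup>2 = Re (cinner x x)"
  using norm_eq_sqrt_cinner[of x] cinner_self_nonneg[of x] by simp

lemma cinner_self_norm: "cinner (x::'a::complex_inner) x = of_real ((norm x)\<^sup>2)"
  by (metis cinner_self_real norm_sq_cinner)

lemma cinner_ext: assumes "\<And>x. cinner x u = cinner x (v::'a::complex_inner)" shows "u = v"
proof -
  have "cinner (u - v) (u - v) = cinner (u - v) u - cinner (u - v) v" by (rule cinner_diff_right)
  also have "\<dots> = 0" using assms[of "u-v"] by simp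
  finally have "u - v = 0" using cinner_self_eq_zero by blast
  thus ?thesis by simp
qed

lemma quad_disc:
  fixes a b c :: real
  assumes "\<And>t. 0 \<le> a + 2*t*b + t\<^sup>2*c"
  shows "b\<^sup>2 \<le> a*c"
proof -
  have a0: "0 \<le> a" using assms[of 0] by simp
  have c0: "c \<ge> 0"
  proof (rule ccontr)
    assume "\<not> c \<ge> 0"
    hence cn: "c < 0" by simp
    define t where "t = (\<bar>a\<bar> + 2*\<bar>b\<bar> + 1) / (-c) + 1"
    have t1: "t \<ge> 1" proof -
      have "(\<bar>a\<bar> + 2*\<bar>b\<bar> + 1) / (-c) \<ge> 0" using cn by (intro divide_nonneg_pos) auto
      thus ?thesis unfolding t_def by linarith
    qed
    have h: "t * (-c) \<ge> \<bar>a\<bar> + 2*\<bar>b\<bar> + 1" using cn by (simp add: t_def field_simps)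
    have "t\<^sup>2 * (-c) = t * (t * (-c))" by (simp add: power2_eq_square)
    also have "\<dots> \<ge> t*(\<bar>a\<bar> + 2*\<bar>b\<bar> + 1)" using h t1 by (intro mult_left_mono) auto
    finally have h2: "t\<^sup>2 * (-c) \<ge> t*(\<bar>a\<bar> + 2*\<bar>b\<bar> + 1)" .
    have "\<bar>a\<bar> \<le> t*\<bar>a\<bar>" using t1 mult_right_mono[of 1 t "\<bar>a\<bar>"] by simp
    hence "a \<le> t*\<bar>a\<bar>" by linarith
    moreover have "t*b \<le> t*\<bar>b\<bar>" using t1 by (intro mult_left_mono) auto
    moreover have "t*(\<bar>a\<bar> + 2*\<bar>b\<bar> + 1) = t*\<bar>a\<bar> + 2*(t*\<bar>b\<bar>) + t" by (simp add: algebra_simps)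
    ultimately have "t*(\<bar>a\<bar> + 2*\<bar>b\<bar> + 1) \<ge> a + 2*t*b + 1" using t1 by linarith
    hence "a + 2*t*b + t\<^sup>2*c < 0" using h2 by simp
    thus False using assms[of t] by linarith
  qed
  show ?thesis
  proof (cases "c = 0")
    case True
    show ?thesis
    proof (cases "b = 0")
      case False
      have "0 \<le> a + 2*(-(a+1)/(2*b))*b" using assms[of "-(a+1)/(2*b)"] True by simp
      also have "\<dots> = -1" using False by (simp add: field_simps)
      finally show ?thesis by simp
    qed (use a0 c0 in simp)
  next
    case c: False
    hence cp: "c > 0" using c0 by simp
    have "0 \<le> a + 2*(-b/c)*b + (-b/c)\<^sup>2*c" using assms by blast
    also have "\<dots> = a - b\<^sup>2/c" using cp by (simp add: power2_eq_square divide_simps)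
    finally have "b\<^sup>2/c \<le> a" by simp
    thus ?thesis using cp by (simp add: pos_divide_le_eq mult.commute)
  qed
qed



lemma clinear_add: "clinear T \<Longrightarrow> T (x + y) = T x + T y" by (simp add: clinear_def)
lemma clinear_scaleC: "clinear T \<Longrightarrow> T (scaleC c x) = scaleC c (T x)" by (simp add: clinear_def)
lemma clinear_zero: "clinear T \<Longrightarrow> T 0 = 0"
  using clinear_add[of T 0 0] by simp
lemma clinear_minus: "clinear T \<Longrightarrow> T (- x) = - T x"
  using clinear_add[of T x "-x"] clinear_zero[of T] by (simp add: eq_neg_iff_add_eq_0 add.commute)
lemma clinear_diff: "clinear T \<Longrightarrow> T (x - y) = T x - T y"
  using clinear_add[of T x "-y"] clinear_minus[of T y] by simp
lemma clinear_scaleR: "clinear T \<Longrightarrow> T (scaleR r x) = scaleR r (T x)"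
  by (simp add: scaleR_scaleC clinear_scaleC)
lemma bounded_clinear_clinear: "bounded_clinear T \<Longrightarrow> clinear T" by (simp add: bounded_clinear_def)
lemma bounded_clinear_pos_bound:
  assumes "bounded_clinear T" obtains M where "M > 0" "\<And>x. norm (T x) \<le> M * norm x"
proof -
  obtain M where M: "\<And>x. norm (T x) \<le> M * norm x" using assms unfolding bounded_clinear_def by blast
  have "norm (T x) \<le> max M 1 * norm x" for x
    using M[of x] mult_right_mono[of M "max M 1" "norm x"] by simp
  thus ?thesis using that[of "max M 1"] by simp
qed

lemma clinear_id: "clinear id" by (simp add: clinear_def)

lemma real_form_hermitian:
  assumes A: "clinear A" and r: "\<And>x. Im (cinner (A x) x) = 0"
  shows "cinner (A x) y = cinner x (A y)"
proof -
  define p where "p = cinner (A x) y"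
  define q where "q = cinner (A y) x"
  have e1: "cinner (A (x+y)) (x+y) = cinner (A x) x + p + q + cinner (A y) y"
    by (simp add: clinear_add[OF A] cinner_add_left cinner_add_right p_def q_def)
  have "Im (cinner (A (x+y)) (x+y)) = 0" by (rule r)
  hence i1: "Im p + Im q = 0" using r[of x] r[of y] unfolding e1 by simp
  define y' where "y' = scaleC \<i> y"
  have e2: "cinner (A (x+y')) (x+y') = cinner (A x) x - \<i> * p + \<i> * q + cinner (A y) y"
    by (simp add: y'_def clinear_add[OF A] clinear_scaleC[OF A] cinner_add_left cinner_add_right
        cinner_scaleC_left cinner_scaleC_right p_def q_def algebra_simps)
  have "Im (cinner (A (x+y')) (x+y')) = 0" by (rule r)
  hence i2: "Re q - Re p = 0" using r[of x] r[of y] unfolding e2 by simp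
  have "p = cnj q" using i1 i2 by (intro complex_eqI) auto
  thus ?thesis unfolding p_def q_def by (metis cinner_commute)
qed

lemma positive_op_hermitian:
  assumes "positive_op R" shows "cinner (R x) y = cinner x (R y)"
proof -
  have "Im (cinner (R z) z) = 0" for z
    using assms unfolding positive_op_def by (metis Im_complex_of_real)
  thus ?thesis using assms unfolding positive_op_def bounded_clinear_def
    by (intro real_form_hermitian) auto
qed

lemma pos_form_cs:
  assumes A: "clinear A" and h: "\<And>x y. cinner (A x) y = cinner x (A y)"
    and p: "\<And>x. 0 \<le> Re (cinner (A x) x)"
  shows "(cmod (cinner (A y) z))\<^sup>2 \<le> Re (cinner (A y) y) * Re (cinner (A z) z)"
proof (cases "cinner (A y) z = 0")
  case True thus ?thesis using p[of y] p[of z] by simp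
next
  case False
  define b where "b = cinner (A y) z"
  define u where "u = b / of_real (cmod b)"
  have bn: "cmod b > 0" using False b_def by simp
  have bb: "b * cnj b = of_real ((cmod b)\<^sup>2)" by (rule complex_norm_square[symmetric])
  have bn': "(of_real (cmod b)::complex) \<noteq> 0" using bn by simp
  have uu: "u * cnj u = 1"
  proof -
    have "u * cnj u = (b * cnj b) / (of_real (cmod b) * of_real (cmod b))"
      unfolding u_def by (simp add: complex_cnj_divide)
    also have "\<dots> = 1" using bn' unfolding bb by (simp add: power2_eq_square)
    finally show ?thesis .
  qed
  have ub: "cnj u * b = of_real (cmod b)"
  proof -
    have "cnj u * b = (b * cnj b) / of_real (cmod b)"
      unfolding u_def by (simp add: complex_cnj_divide mult.commute)
    also have "\<dots> = of_real (cmod b)" using bn' unfolding bb by (simp add: power2_eq_square)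
    finally show ?thesis .
  qed
  have ub': "u * cnj b = of_real (cmod b)"
    using arg_cong[OF ub, of cnj] by (simp add: mult.commute)
  have zy: "cinner (A z) y = cnj b" unfolding b_def by (metis h cinner_commute)
  have "0 \<le> Re (cinner (A y) y) + 2*t*cmod b + t\<^sup>2 * Re (cinner (A z) z)" for t
  proof -
    define s where "s = of_real t * u"
    have "cinner (A (y + scaleC s z)) (y + scaleC s z) =
       cinner (A y) y + cnj s * b + s * cnj b + s * cnj s * cinner (A z) z"
      by (simp add: clinear_add[OF A] clinear_scaleC[OF A] cinner_add_left cinner_add_right
        cinner_scaleC_left cinner_scaleC_right b_def[symmetric] zy algebra_simps)
    also have "cnj s * b = of_real (t * cmod b)" unfolding s_def using ub
      by (simp add: mult.assoc)
    also have "s * cnj b = of_real (t * cmod b)" unfolding s_def using ub'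
      by (simp add: mult.assoc)
    also have "s * cnj s = of_real (t\<^sup>2)" unfolding s_def using uu
      by (simp add: power2_eq_square algebra_simps)
    finally have "Re (cinner (A (y + scaleC s z)) (y + scaleC s z)) =
        Re (cinner (A y) y) + 2*t*cmod b + t\<^sup>2 * Re (cinner (A z) z)" by simp
    thus ?thesis using p[of "y + scaleC s z"] by simp
  qed
  from quad_disc[OF this] show ?thesis unfolding b_def by simp
qed

lemma cinner_cs: "cmod (cinner (x::'a::complex_inner) y) \<le> norm x * norm y"
proof -
  have "(cmod (cinner (id x) y))\<^sup>2 \<le> Re (cinner (id x) x) * Re (cinner (id y) y)"
    by (rule pos_form_cs[OF clinear_id]) (auto simp: cinner_self_nonneg)
  hence "(cmod (cinner x y))\<^sup>2 \<le> (norm x * norm y)\<^sup>2" by (simp add: norm_sq_cinner power_mult_distrib)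
  thus ?thesis by (meson abs_le_square_iff abs_of_nonneg norm_ge_zero zero_le_mult_iff real_le_rsqrt
      power2_le_imp_le mult_nonneg_nonneg)
qed

lemma norm_sq_add: "(norm (a + b::'a::complex_inner))\<^sup>2 = (norm a)\<^sup>2 + 2 * Re (cinner a b) + (norm b)\<^sup>2"
proof -
  have "Re (cinner b a) = Re (cinner a b)" by (metis cinner_commute complex_cnj_cnj cnj.sel(1))
  thus ?thesis by (simp add: norm_sq_cinner cinner_add_left cinner_add_right)
qed

lemma norm_sq_diff: "(norm (a - b::'a::complex_inner))\<^sup>2 = (norm a)\<^sup>2 - 2 * Re (cinner a b) + (norm b)\<^sup>2"
  using norm_sq_add[of a "-b"] by (simp add: cinner_minus_right)

lemma parallelogram: "(norm (a + b::'a::complex_inner))\<^sup>2 + (norm (a - b))\<^sup>2 = 2*(norm a)\<^sup>2 + 2*(norm b)\<^sup>2"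
  by (simp add: norm_sq_add norm_sq_diff)



lemma min_orth:
  fixes u m :: "'a::complex_inner"
  assumes H: "\<And>s. (norm u)\<^sup>2 \<le> (norm (u - scaleC s m))\<^sup>2"
  shows "cinner u m = 0"
proof -
  define b where "b = cinner u m"
  have "0 \<le> 0 + 2*t*(-(cmod b)\<^sup>2) + t\<^sup>2*((cmod b)\<^sup>2 * (norm m)\<^sup>2)" for t
  proof -
    define s where "s = of_real t * b"
    have bb: "cnj b * b = of_real ((cmod b)\<^sup>2)" by (metis complex_norm_square mult.commute)
    have c1: "cinner u (scaleC s m) = of_real (t * (cmod b)\<^sup>2)"
      unfolding s_def cinner_scaleC_right b_def[symmetric]
      by (simp add: bb mult.assoc)
    have c2: "(norm (scaleC s m))\<^sup>2 = t\<^sup>2*((cmod b)\<^sup>2 * (norm m)\<^sup>2)"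
      unfolding norm_scaleC s_def by (simp add: norm_mult power_mult_distrib)
    show ?thesis using H[of s] unfolding norm_sq_diff c1 c2 by simp
  qed
  from quad_disc[OF this] have "((cmod b)\<^sup>2)\<^sup>2 \<le> 0" by simp
  hence "(cmod b)\<^sup>2 = 0" by simp
  thus ?thesis unfolding b_def by simp
qed

lemma riesz:
  fixes g :: "'a::chilbert_space \<Rightarrow> complex"
  assumes add: "\<And>x y. g (x + y) = g x + g y" and sc: "\<And>c x. g (scaleC c x) = c * g x"
    and bd: "\<And>x. cmod (g x) \<le> M * norm x"
  shows "\<exists>z. \<forall>x. g x = cinner x z"
proof (cases "\<forall>x. g x = 0")
  case True thus ?thesis by (intro exI[of _ 0]) simp
next
  case False
  then obtain x0 where gx0: "g x0 \<noteq> 0" by blast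
  have g0: "g 0 = 0" using add[of 0 0] by simp
  have gdiff: "g (x - y) = g x - g y" for x y using add[of "x - y" y] by simp
  have gR: "g (scaleR r x) = of_real r * g x" for r x by (simp add: scaleR_scaleC sc)
  define N where "N = {n. g n = 0}"
  have NR: "scaleR r n \<in> N" if "n \<in> N" for r n using that gR unfolding N_def by simp
  have Nadd: "n + m \<in> N" if "n \<in> N" "m \<in> N" for n m using that add unfolding N_def by simp
  define F where "F = (\<lambda>n. (norm (x0 - n))\<^sup>2) ` N"
  define d where "d = Inf F"
  have Fne: "F \<noteq> {}" unfolding F_def N_def using g0 by auto
  have bddF: "bdd_below F" unfolding F_def by (rule bdd_belowI[of _ 0]) auto
  have dle: "d \<le> (norm (x0 - n))\<^sup>2" if "n \<in> N" for n
    unfolding d_def using that bddF by (intro cInf_lower) (auto simp: F_def)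
  have "\<exists>n. n \<in> N \<and> (norm (x0 - n))\<^sup>2 < d + 1 / (real k + 1)" for k
  proof -
    have "Inf F < d + 1 / (real k + 1)" unfolding d_def by (simp add: add_pos_pos)
    from cInf_lessD[OF Fne this] show ?thesis unfolding F_def by auto
  qed
  then obtain nn where nnN: "\<And>k. nn k \<in> N" and nnd: "\<And>k. (norm (x0 - nn k))\<^sup>2 < d + 1 / (real k + 1)"
    by metis
  have close: "(norm (nn k - nn m))\<^sup>2 \<le> 2 / (real k + 1) + 2 / (real m + 1)" for k m
  proof -
    define a where "a = x0 - nn k"
    define b where "b = x0 - nn m"
    define mid where "mid = scaleR (1/2) (nn k + nn m)"
    have midN: "mid \<in> N" unfolding mid_def using nnN Nadd NR by blast
    have ab: "a + b = scaleR 2 (x0 - mid)" unfolding a_def b_def mid_def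
      by (simp add: algebra_simps scaleR_2)
    have "(norm (a + b))\<^sup>2 = 4 * (norm (x0 - mid))\<^sup>2" unfolding ab by (simp add: power_mult_distrib)
    hence "(norm (a + b))\<^sup>2 \<ge> 4 * d" using dle[OF midN] by simp
    moreover have "norm (nn k - nn m) = norm (a - b)"
    proof -
      have "a - b = nn m - nn k" unfolding a_def b_def by (simp add: algebra_simps)
      thus ?thesis by (simp add: norm_minus_commute)
    qed
    moreover have "(norm a)\<^sup>2 < d + 1 / (real k + 1)" "(norm b)\<^sup>2 < d + 1 / (real m + 1)"
      unfolding a_def b_def using nnd by auto
    ultimately show ?thesis using parallelogram[of a b] by simp
  qed
  have "Cauchy nn"
  proof (rule CauchyI)
    fix e :: real assume e: "0 < e"
    obtain K :: nat where K: "4 / e\<^sup>2 < real K" using reals_Archimedean2 by blast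
    have e2: "e\<^sup>2 > 0" using e by simp
    show "\<exists>M. \<forall>m\<ge>M. \<forall>n\<ge>M. norm (nn m - nn n) < e"
    proof (intro exI allI impI)
      fix m n assume mK: "m \<ge> K" and nK: "n \<ge> K"
      have "2 / (real m + 1) \<le> 2 / (real K + 1)" using mK by (intro divide_left_mono) auto
      moreover have "2 / (real n + 1) \<le> 2 / (real K + 1)" using nK by (intro divide_left_mono) auto
      moreover have "4 / (real K + 1) < e\<^sup>2"
      proof -
        have "4 < e\<^sup>2 * real K" using K e2 by (simp add: divide_less_eq mult.commute)
        hence "4 < e\<^sup>2 * real K + e\<^sup>2" using e2 by linarith
        hence "4 < e\<^sup>2 * (real K + 1)" by (simp add: algebra_simps)
        thus ?thesis by (simp add: divide_less_eq)
      qed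
      ultimately have "(norm (nn m - nn n))\<^sup>2 < e\<^sup>2" using close[of m n] by simp
      thus "norm (nn m - nn n) < e" using e by (simp add: power_less_imp_less_base)
    qed
  qed
  then obtain n where nlim: "nn \<longlonglongrightarrow> n" using Cauchy_convergent_iff convergent_def by blast
  have nz: "(\<lambda>k. norm (nn k - n)) \<longlonglongrightarrow> 0"
    using nlim by (simp add: LIM_zero tendsto_norm_zero)
  have nN: "n \<in> N"
  proof -
    have gb: "cmod (g n) \<le> M * norm (nn k - n)" for k
    proof -
      have "g n = - g (nn k - n)" using nnN[of k] unfolding N_def by (simp add: gdiff)
      thus ?thesis using bd[of "nn k - n"] by simp
    qed
    have ev: "\<forall>\<^sub>F k in sequentially. cmod (g n) \<le> M * norm (nn k - n)"
      using gb by (simp add: always_eventually)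
    have "cmod (g n) \<le> 0"
      using tendsto_le[OF trivial_limit_sequentially tendsto_mult_right_zero[OF nz, of M] tendsto_const ev]
      by simp
    thus ?thesis unfolding N_def by simp
  qed
  have nmin: "(norm (x0 - n))\<^sup>2 \<le> d"
  proof -
    have l1: "(\<lambda>k. (norm (x0 - nn k))\<^sup>2) \<longlonglongrightarrow> (norm (x0 - n))\<^sup>2"
      by (intro tendsto_intros nlim)
    have l2: "(\<lambda>k. d + 1 / (real k + 1)) \<longlonglongrightarrow> d"
      using LIMSEQ_inverse_real_of_nat_add[of d] by (simp add: inverse_eq_divide add.commute)
    have "\<forall>\<^sub>F k in sequentially. (norm (x0 - nn k))\<^sup>2 \<le> d + 1 / (real k + 1)"
      by (intro always_eventually allI less_imp_le nnd)
    thus ?thesis using tendsto_le[OF trivial_limit_sequentially l2 l1] by blast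
  qed
  define u where "u = x0 - n"
  have gu: "g u = g x0" unfolding u_def using nN unfolding N_def by (simp add: gdiff)
  have orth: "cinner u m = 0" if "m \<in> N" for m
  proof (rule min_orth)
    fix s
    have "n + scaleC s m \<in> N" using nN that sc add unfolding N_def by simp
    hence "d \<le> (norm (x0 - (n + scaleC s m)))\<^sup>2" by (rule dle)
    moreover have "x0 - (n + scaleC s m) = u - scaleC s m" unfolding u_def by (simp add: algebra_simps)
    ultimately show "(norm u)\<^sup>2 \<le> (norm (u - scaleC s m))\<^sup>2" using nmin unfolding u_def by (metis order_trans)
  qed
  have u0: "u \<noteq> 0" using gu gx0 g0 by auto
  define nu where "nu = (norm u)\<^sup>2"
  have nu0: "nu > 0" using u0 unfolding nu_def by simp
  define z where "z = scaleC (cnj (g u) / of_real nu) u"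
  show ?thesis
  proof (intro exI allI)
    fix x
    define w where "w = x - scaleC (g x / g u) u"
    have "g w = 0" unfolding w_def using gu gx0 by (simp add: gdiff sc)
    hence "cinner u w = 0" using orth unfolding N_def by simp
    hence "cinner w u = 0" by (metis cinner_commute complex_cnj_zero)
    hence "cinner x u = (g x / g u) * of_real nu"
      unfolding w_def nu_def by (simp add: cinner_diff_left cinner_scaleC_left cinner_self_norm)
    thus "g x = cinner x z" unfolding z_def cinner_scaleC_right using gu gx0 nu0
      by (simp add: field_simps)
  qed
qed

lemma adj_exists:
  assumes T: "bounded_clinear (T::'a::chilbert_space \<Rightarrow> 'b::chilbert_space)"
  shows "\<exists>S. \<forall>x y. cinner (T x) y = cinner x (S y)"
proof -
  obtain M where M: "\<And>x. norm (T x) \<le> M * norm x" "M > 0" using bounded_clinear_pos_bound[OF T] by metis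
  have TL: "clinear T" using T by (rule bounded_clinear_clinear)
  have "\<exists>z. \<forall>x. cinner (T x) y = cinner x z" for y
  proof (rule riesz[where M = "M * norm y"])
    show "cinner (T (x1 + x2)) y = cinner (T x1) y + cinner (T x2) y" for x1 x2
      by (simp add: clinear_add[OF TL] cinner_add_left)
    show "cinner (T (scaleC c x)) y = c * cinner (T x) y" for c x
      by (simp add: clinear_scaleC[OF TL] cinner_scaleC_left)
    show "cmod (cinner (T x) y) \<le> M * norm y * norm x" for x
      using cinner_cs[of "T x" y] M(1)[of x] mult_right_mono[of "norm (T x)" "M * norm x" "norm y"]
      by (simp add: algebra_simps)
  qed
  thus ?thesis by metis
qed

lemma adj_prop:
  assumes T: "bounded_clinear (T::'a::chilbert_space \<Rightarrow> 'b::chilbert_space)"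
  shows "cinner (T x) y = cinner x (adj T y)"
  using someI_ex[OF adj_exists[OF T]] unfolding adj_def by blast

lemma adj_bounded_clinear:
  assumes T: "bounded_clinear (T::'a::chilbert_space \<Rightarrow> 'b::chilbert_space)"
  shows "bounded_clinear (adj T)"
proof -
  obtain M where M: "\<And>x. norm (T x) \<le> M * norm x" "M > 0" using bounded_clinear_pos_bound[OF T] by metis
  have "adj T (y1 + y2) = adj T y1 + adj T y2" for y1 y2
    by (rule cinner_ext) (simp add: adj_prop[OF T, symmetric] cinner_add_right)
  moreover have "adj T (scaleC c y) = scaleC c (adj T y)" for c y
    by (rule cinner_ext) (simp add: adj_prop[OF T, symmetric] cinner_scaleC_right)
  moreover have "norm (adj T y) \<le> M * norm y" for y
  proof -
    have "(norm (adj T y))\<^sup>2 = Re (cinner (T (adj T y)) y)"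
      by (simp add: adj_prop[OF T] norm_sq_cinner)
    also have "\<dots> \<le> cmod (cinner (T (adj T y)) y)" by (rule complex_Re_le_cmod)
    also have "\<dots> \<le> norm (T (adj T y)) * norm y" by (rule cinner_cs)
    also have "\<dots> \<le> M * norm (adj T y) * norm y" using M(1) by (simp add: mult_right_mono)
    finally have h: "norm (adj T y) * norm (adj T y) \<le> (M * norm y) * norm (adj T y)"
      by (simp add: power2_eq_square algebra_simps)
    show ?thesis
    proof (cases "norm (adj T y) = 0")
      case True thus ?thesis using M(2) by simp
    next
      case False thus ?thesis using h by (simp add: mult_le_cancel_right)
    qed
  qed
  ultimately show ?thesis unfolding bounded_clinear_def clinear_def by blast
qed



lemma pos_sq_bound:
  assumes R: "positive_op (R::'a::chilbert_space \<Rightarrow> 'a)" and M: "\<And>x. norm (R x) \<le> M * norm x" "M > 0"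
  shows "(norm (R y))\<^sup>2 \<le> M * Re (cinner (R y) y)"
proof -
  have RL: "clinear R" using R unfolding positive_op_def bounded_clinear_def by simp
  have h: "\<And>x y. cinner (R x) y = cinner x (R y)" by (rule positive_op_hermitian[OF R])
  have p: "\<And>x. 0 \<le> Re (cinner (R x) x)" using R unfolding positive_op_def by simp
  have cs: "(cmod (cinner (R y) (R y)))\<^sup>2 \<le> Re (cinner (R y) y) * Re (cinner (R (R y)) (R y))"
    by (rule pos_form_cs[OF RL h p])
  have e1: "cmod (cinner (R y) (R y)) = (norm (R y))\<^sup>2" unfolding cinner_self_norm norm_of_real by simp
  have "Re (cinner (R (R y)) (R y)) \<le> cmod (cinner (R (R y)) (R y))" by (rule complex_Re_le_cmod)
  also have "\<dots> \<le> norm (R (R y)) * norm (R y)" by (rule cinner_cs)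
  also have "\<dots> \<le> M * norm (R y) * norm (R y)" using M(1) by (simp add: mult_right_mono)
  finally have e2: "Re (cinner (R (R y)) (R y)) \<le> M * (norm (R y))\<^sup>2" by (simp add: power2_eq_square)
  have "((norm (R y))\<^sup>2)\<^sup>2 \<le> Re (cinner (R y) y) * (M * (norm (R y))\<^sup>2)"
    using cs e2 p[of y] unfolding e1 by (meson mult_left_mono order_trans)
  hence "(norm (R y))\<^sup>2 * (norm (R y))\<^sup>2 \<le> (M * Re (cinner (R y) y)) * (norm (R y))\<^sup>2"
    by (simp add: power2_eq_square algebra_simps)
  moreover have "\<And>(u::real) v. 0 \<le> u \<Longrightarrow> u * u \<le> v * u \<Longrightarrow> 0 \<le> v \<Longrightarrow> u \<le> v"
  proof -
    fix u v :: real assume "0 \<le> u" "u * u \<le> v * u" "0 \<le> v"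
    thus "u \<le> v" by (cases "u = 0") (auto intro: mult_right_le_imp_le)
  qed
  ultimately show ?thesis using p[of y] M(2) by (metis mult_nonneg_nonneg less_imp_le zero_le_power2)
qed

lemma sylvester_zero:
  fixes R T :: "'a::chilbert_space \<Rightarrow> 'a"
  assumes R: "positive_op R" and a: "a > 0" "\<And>y. a * norm y \<le> norm (R y)"
    and T: "bounded_clinear T" and comm2: "\<And>x. T (R (R x)) = R (R (T x))"
  shows "T (R x) = R (T x)"
proof -
  have RB: "bounded_clinear R" using R unfolding positive_op_def by simp
  have RL: "clinear R" using RB by (rule bounded_clinear_clinear)
  have TL: "clinear T" using T by (rule bounded_clinear_clinear)
  obtain M where M: "M > 0" "\<And>x. norm (R x) \<le> M * norm x" using bounded_clinear_pos_bound[OF RB] by metis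
  obtain MT where MT: "MT > 0" "\<And>x. norm (T x) \<le> MT * norm x" using bounded_clinear_pos_bound[OF T] by metis
  have h: "\<And>x y. cinner (R x) y = cinner x (R y)" by (rule positive_op_hermitian[OF R])
  define X where "X = (\<lambda>y. y - scaleR (1/M) (R y))"
  define Q where "Q = 1 - a\<^sup>2 / M\<^sup>2"
  define q where "q = sqrt (max Q 0)"
  have q0: "q \<ge> 0" unfolding q_def by simp
  have q1: "q < 1"
  proof -
    have "a\<^sup>2 / M\<^sup>2 > 0" using a M by simp
    hence "max Q 0 < 1" unfolding Q_def by simp
    thus ?thesis unfolding q_def by simp
  qed
  have Xb: "norm (X y) \<le> q * norm y" for y
  proof -
    define n where "n = (norm (R y))\<^sup>2"
    define t where "t = Re (cinner (R y) y)"
    define ny where "ny = (norm y)\<^sup>2"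
    have re: "Re (cinner y (R y)) = t" using h[of y y] unfolding t_def by simp
    have a1: "Re (cinner y (scaleR (1/M) (R y))) = (1/M) * t"
      unfolding cinner_scaleR_right using re by simp
    have a2: "(norm (scaleR (1/M) (R y)))\<^sup>2 = (1/M)\<^sup>2 * n"
      unfolding n_def norm_scaleR using M(1) by (simp add: power_divide)
    have "(norm (X y))\<^sup>2 = ny - 2 * ((1/M) * t) + (1/M)\<^sup>2 * n"
      unfolding X_def norm_sq_diff a1 a2 ny_def by simp
    also have "\<dots> \<le> ny - 2 * ((1/M) * (n / M)) + (1/M)\<^sup>2 * n"
    proof -
      have "n / M \<le> t"
        using pos_sq_bound[OF R M(2) M(1)] M(1) unfolding n_def t_def by (simp add: divide_le_eq mult.commute)
      hence "(1/M) * (n / M) \<le> (1/M) * t"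
        using M(1) mult_left_mono[of "n/M" t "1/M"] by simp
      thus ?thesis by linarith
    qed
    also have "\<dots> = ny - n / M\<^sup>2"
    proof -
      have "(1/M) * (n / M) = n / M\<^sup>2" by (simp add: power2_eq_square)
      moreover have "(1/M)\<^sup>2 * n = n / M\<^sup>2" by (simp add: power2_eq_square)
      ultimately show ?thesis by linarith
    qed
    also have "\<dots> \<le> ny - (a * norm y)\<^sup>2 / M\<^sup>2"
    proof -
      have "(a * norm y)\<^sup>2 \<le> n" unfolding n_def using a(2)[of y] a(1) power_mono[of "a * norm y" "norm (R y)" 2] by simp
      hence "(a * norm y)\<^sup>2 / M\<^sup>2 \<le> n / M\<^sup>2" using divide_right_mono[of "(a * norm y)\<^sup>2" n "M\<^sup>2"] by simp
      thus ?thesis by linarith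
    qed
    also have "\<dots> = Q * ny" unfolding Q_def ny_def by (simp add: power_mult_distrib algebra_simps)
    also have "\<dots> \<le> q\<^sup>2 * ny"
    proof -
      have "q\<^sup>2 = max Q 0" unfolding q_def by simp
      thus ?thesis unfolding ny_def by (simp add: mult_right_mono)
    qed
    finally have "(norm (X y))\<^sup>2 \<le> (q * norm y)\<^sup>2" unfolding ny_def by (simp add: power_mult_distrib)
    from power2_le_imp_le[OF this] show ?thesis using q0 by simp
  qed
  define Dm where "Dm = (\<lambda>x. R (T x) - T (R x))"
  have Dlin: "Dm (x - scaleR r y) = Dm x - scaleR r (Dm y)" for x y r
    unfolding Dm_def by (simp add: clinear_diff[OF RL] clinear_diff[OF TL] clinear_scaleR[OF RL]
        clinear_scaleR[OF TL] algebra_simps)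
  have anti: "R (Dm x) + Dm (R x) = 0" for x
    unfolding Dm_def by (simp add: clinear_diff[OF RL] comm2)
  have two: "scaleR 2 (Dm x) = X (Dm x) + Dm (X x)" for x
  proof -
    have "X (Dm x) + Dm (X x) = scaleR 2 (Dm x) - scaleR (1/M) (R (Dm x) + Dm (R x))"
      unfolding X_def Dlin by (simp add: algebra_simps scaleR_2)
    thus ?thesis using anti by simp
  qed
  have step: "norm (Dm x) \<le> norm (Dm (X x))" for x
  proof -
    have "2 * norm (Dm x) = norm (scaleR 2 (Dm x))" by simp
    also have "\<dots> = norm (X (Dm x) + Dm (X x))" using two[of x] by simp
    also have "\<dots> \<le> norm (X (Dm x)) + norm (Dm (X x))" by (rule norm_triangle_ineq)
    also have "norm (X (Dm x)) \<le> norm (Dm x)"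
    proof -
      have "q * norm (Dm x) \<le> 1 * norm (Dm x)" using q1 by (intro mult_right_mono) auto
      thus ?thesis using Xb[of "Dm x"] by simp
    qed
    finally show ?thesis by simp
  qed
  define BD where "BD = 2 * M * MT"
  have ind: "norm (Dm x) \<le> q ^ n * BD * norm x" for n x
  proof (induction n arbitrary: x)
    case 0
    have "norm (Dm x) \<le> norm (R (T x)) + norm (T (R x))" unfolding Dm_def by (rule norm_triangle_ineq4)
    also have "norm (R (T x)) \<le> M * (MT * norm x)"
      using order_trans[OF M(2)[of "T x"] mult_left_mono[OF MT(2)[of x]]] M(1) by simp
    also have "norm (T (R x)) \<le> MT * (M * norm x)"
      using order_trans[OF MT(2)[of "R x"] mult_left_mono[OF M(2)[of x]]] MT(1) by simp
    finally show ?case unfolding BD_def by (simp add: algebra_simps)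
  next
    case (Suc n)
    have "norm (Dm x) \<le> norm (Dm (X x))" by (rule step)
    also have "\<dots> \<le> q ^ n * BD * norm (X x)" by (rule Suc)
    also have "\<dots> \<le> q ^ n * BD * (q * norm x)"
      using Xb[of x] q0 M(1) MT(1) unfolding BD_def by (intro mult_left_mono) auto
    finally show ?case by (simp add: algebra_simps)
  qed
  have lim: "(\<lambda>n. q ^ n * BD * norm x) \<longlonglongrightarrow> 0 * BD * norm x"
    using q0 q1 by (intro tendsto_intros LIMSEQ_power_zero) simp
  have ev: "\<forall>\<^sub>F n in sequentially. norm (Dm x) \<le> q ^ n * BD * norm x"
    using ind by (simp add: always_eventually)
  have "norm (Dm x) \<le> 0 * BD * norm x"
    by (rule tendsto_le[OF trivial_limit_sequentially lim tendsto_const ev])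
  thus ?thesis unfolding Dm_def by simp
qed



lemma pair_set_Sigma: "{(j,k). j \<in> S \<and> k \<in> I j} = Sigma S I" by auto

lemma pair_part:
  fixes g :: "nat \<Rightarrow> nat \<Rightarrow> real"
  assumes nn: "\<And>j k. 0 \<le> g j k" and sm: "\<And>j. g j summable_on I j"
  shows "(\<lambda>(j,k). g j k) summable_on {(j,k). j \<in> S \<and> k \<in> I j} \<longleftrightarrow> (\<lambda>j. infsum (g j) (I j)) summable_on S"
    and "(\<lambda>j. infsum (g j) (I j)) summable_on S \<Longrightarrow>
         infsum (\<lambda>(j,k). g j k) {(j,k). j \<in> S \<and> k \<in> I j} = infsum (\<lambda>j. infsum (g j) (I j)) S"
proof -
  show "(\<lambda>(j,k). g j k) summable_on {(j,k). j \<in> S \<and> k \<in> I j} \<longleftrightarrow> (\<lambda>j. infsum (g j) (I j)) summable_on S"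
  proof
    assume "(\<lambda>(j,k). g j k) summable_on {(j,k). j \<in> S \<and> k \<in> I j}"
    hence "(\<lambda>(j,k). g j k) summable_on Sigma S I" unfolding pair_set_Sigma .
    thus "(\<lambda>j. infsum (g j) (I j)) summable_on S" by (rule summable_on_Sigma_banach)
  next
    assume a: "(\<lambda>j. infsum (g j) (I j)) summable_on S"
    have "(\<lambda>(j,k). g j k) summable_on Sigma S I"
    proof (rule summable_on_SigmaI[where g = "\<lambda>j. infsum (g j) (I j)"])
      show "((\<lambda>y. (\<lambda>(j,k). g j k) (x, y)) has_sum infsum (g x) (I x)) (I x)" if "x \<in> S" for x
        using has_sum_infsum[OF sm[of x]] by simp
      show "(\<lambda>j. infsum (g j) (I j)) summable_on S" by (rule a)
      show "0 \<le> (\<lambda>(j,k). g j k) (x, y)" for x y using nn by simp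
    qed
    thus "(\<lambda>(j,k). g j k) summable_on {(j,k). j \<in> S \<and> k \<in> I j}" unfolding pair_set_Sigma .
  qed
  assume a: "(\<lambda>j. infsum (g j) (I j)) summable_on S"
  have "(\<lambda>(j,k). g j k) summable_on Sigma S I"
    using \<open>_ \<longleftrightarrow> _\<close> a unfolding pair_set_Sigma by blast
  thus "infsum (\<lambda>(j,k). g j k) {(j,k). j \<in> S \<and> k \<in> I j} = infsum (\<lambda>j. infsum (g j) (I j)) S"
    unfolding pair_set_Sigma by (rule infsum_Sigma'_banach[symmetric])
qed

lemma compare_sum:
  fixes d c :: "nat \<Rightarrow> real"
  assumes d0: "\<And>j. 0 \<le> d j" and lo: "\<And>j. m * d j \<le> c j" and hi: "\<And>j. c j \<le> Mx * d j" and m: "m > 0"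
  shows "d summable_on UNIV \<longleftrightarrow> c summable_on UNIV"
    and "c summable_on UNIV \<Longrightarrow> m * infsum d UNIV \<le> infsum c UNIV \<and> infsum c UNIV \<le> Mx * infsum d UNIV"
proof -
  have c0: "0 \<le> c j" for j using lo[of j] d0[of j] m by (meson mult_nonneg_nonneg less_imp_le order_trans)
  have dc: "d j \<le> (1/m) * c j" for j using lo[of j] m by (simp add: field_simps mult.commute)
  show eq: "d summable_on UNIV \<longleftrightarrow> c summable_on UNIV"
  proof
    assume "d summable_on UNIV"
    hence "(\<lambda>j. Mx * d j) summable_on UNIV" by (rule summable_on_cmult_right)
    thus "c summable_on UNIV" by (rule summable_on_comparison_test) (use hi c0 in auto)
  next
    assume "c summable_on UNIV"
    hence "(\<lambda>j. (1/m) * c j) summable_on UNIV" by (rule summable_on_cmult_right)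
    thus "d summable_on UNIV" by (rule summable_on_comparison_test) (use dc d0 in auto)
  qed
  assume cs: "c summable_on UNIV"
  hence ds: "d summable_on UNIV" using eq by blast
  have "m * infsum d UNIV = infsum (\<lambda>j. m * d j) UNIV" by (simp add: infsum_cmult_right ds)
  also have "\<dots> \<le> infsum c UNIV"
    by (rule infsum_mono[OF summable_on_cmult_right[OF ds] cs]) (use lo in auto)
  finally have 1: "m * infsum d UNIV \<le> infsum c UNIV" .
  have "infsum c UNIV \<le> infsum (\<lambda>j. Mx * d j) UNIV"
    by (rule infsum_mono[OF cs summable_on_cmult_right[OF ds]]) (use hi in auto)
  also have "\<dots> = Mx * infsum d UNIV" by (simp add: infsum_cmult_right ds)
  finally show "m * infsum d UNIV \<le> infsum c UNIV \<and> infsum c UNIV \<le> Mx * infsum d UNIV" using 1 by simp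
qed

lemma split_sum:
  fixes c :: "nat \<Rightarrow> real"
  shows "c summable_on UNIV \<longleftrightarrow> c summable_on S \<and> c summable_on (- S)"
    and "c summable_on UNIV \<Longrightarrow> infsum c UNIV = infsum c S + infsum c (- S)"
proof -
  show "c summable_on UNIV \<longleftrightarrow> c summable_on S \<and> c summable_on (- S)"
  proof
    assume "c summable_on UNIV"
    thus "c summable_on S \<and> c summable_on (- S)" using summable_on_subset_banach by blast
  next
    assume "c summable_on S \<and> c summable_on (- S)"
    hence "c summable_on (S \<union> - S)" by (intro summable_on_Un_disjoint) auto
    thus "c summable_on UNIV" by simp
  qed
  assume "c summable_on UNIV"
  hence "c summable_on S" "c summable_on (- S)" using summable_on_subset_banach by blast+
  hence "infsum c (S \<union> - S) = infsum c S + infsum c (- S)" by (intro infsum_Un_disjoint) auto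
  thus "infsum c UNIV = infsum c S + infsum c (- S)" by simp
qed


lemma per_sigma:
  fixes aL bO :: "nat \<Rightarrow> real" and gL gO :: "nat \<Rightarrow> nat \<Rightarrow> real"
  assumes nL: "\<And>j k. 0 \<le> gL j k" and nO: "\<And>j k. 0 \<le> gO j k"
    and a0: "\<And>j. 0 \<le> aL j" and b0: "\<And>j. 0 \<le> bO j"
    and sL: "\<And>j. gL j summable_on I j" and sO: "\<And>j. gO j summable_on Q j"
    and lL: "\<And>j. \<alpha> * aL j \<le> infsum (gL j) (I j)" and hL: "\<And>j. infsum (gL j) (I j) \<le> \<beta> * aL j"
    and lO: "\<And>j. \<alpha>' * bO j \<le> infsum (gO j) (Q j)" and hO: "\<And>j. infsum (gO j) (Q j) \<le> \<beta>' * bO j"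
    and pos: "\<alpha> > 0" "\<alpha>' > 0"
  shows "(\<lambda>j. if j \<in> \<sigma> then aL j else bO j) summable_on UNIV \<longleftrightarrow>
          ((\<lambda>(j,k). gL j k) summable_on {(j,k). j \<in> \<sigma> \<and> k \<in> I j} \<and>
           (\<lambda>(j,k). gO j k) summable_on {(j,k). j \<notin> \<sigma> \<and> k \<in> Q j})"
    and "(\<lambda>j. if j \<in> \<sigma> then aL j else bO j) summable_on UNIV \<Longrightarrow>
          min \<alpha> \<alpha>' * infsum (\<lambda>j. if j \<in> \<sigma> then aL j else bO j) UNIV \<le>
            infsum (\<lambda>(j,k). gL j k) {(j,k). j \<in> \<sigma> \<and> k \<in> I j} + infsum (\<lambda>(j,k). gO j k) {(j,k). j \<notin> \<sigma> \<and> k \<in> Q j} \<and>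
          infsum (\<lambda>(j,k). gL j k) {(j,k). j \<in> \<sigma> \<and> k \<in> I j} + infsum (\<lambda>(j,k). gO j k) {(j,k). j \<notin> \<sigma> \<and> k \<in> Q j}
            \<le> max \<beta> \<beta>' * infsum (\<lambda>j. if j \<in> \<sigma> then aL j else bO j) UNIV"
proof -
  define d where "d = (\<lambda>j. if j \<in> \<sigma> then aL j else bO j)"
  define c where "c = (\<lambda>j. if j \<in> \<sigma> then infsum (gL j) (I j) else infsum (gO j) (Q j))"
  define m where "m = min \<alpha> \<alpha>'"
  define Mx where "Mx = max \<beta> \<beta>'"
  have m0: "m > 0" unfolding m_def using pos by simp
  have d0: "0 \<le> d j" for j unfolding d_def using a0 b0 by simp
  have lo: "m * d j \<le> c j" for j
  proof (cases "j \<in> \<sigma>")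
    case True
    have "m * aL j \<le> \<alpha> * aL j" unfolding m_def using a0[of j] by (simp add: mult_right_mono)
    thus ?thesis using True lL[of j] unfolding d_def c_def by simp
  next
    case False
    have "m * bO j \<le> \<alpha>' * bO j" unfolding m_def using b0[of j] by (simp add: mult_right_mono)
    thus ?thesis using False lO[of j] unfolding d_def c_def by simp
  qed
  have hi: "c j \<le> Mx * d j" for j
  proof (cases "j \<in> \<sigma>")
    case True
    have "\<beta> * aL j \<le> Mx * aL j" unfolding Mx_def using a0[of j] by (simp add: mult_right_mono)
    thus ?thesis using True hL[of j] unfolding d_def c_def by simp
  next
    case False
    have "\<beta>' * bO j \<le> Mx * bO j" unfolding Mx_def using b0[of j] by (simp add: mult_right_mono)
    thus ?thesis using False hO[of j] unfolding d_def c_def by simp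
  qed
  note cmp = compare_sum[of d m c Mx, OF d0 lo hi m0]
  have cL: "c summable_on \<sigma> \<longleftrightarrow> (\<lambda>j. infsum (gL j) (I j)) summable_on \<sigma>"
    by (rule summable_on_cong) (simp add: c_def)
  have cO: "c summable_on (- \<sigma>) \<longleftrightarrow> (\<lambda>j. infsum (gO j) (Q j)) summable_on (- \<sigma>)"
    by (rule summable_on_cong) (simp add: c_def)
  have iL: "infsum c \<sigma> = infsum (\<lambda>j. infsum (gL j) (I j)) \<sigma>"
    by (rule infsum_cong) (simp add: c_def)
  have iO: "infsum c (- \<sigma>) = infsum (\<lambda>j. infsum (gO j) (Q j)) (- \<sigma>)"
    by (rule infsum_cong) (simp add: c_def)
  note pL = pair_part[of gL I \<sigma>, OF nL sL]
  note pO = pair_part[of gO Q "- \<sigma>", OF nO sO, simplified]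
  show eqv: "d summable_on UNIV \<longleftrightarrow>
          ((\<lambda>(j,k). gL j k) summable_on {(j,k). j \<in> \<sigma> \<and> k \<in> I j} \<and>
           (\<lambda>(j,k). gO j k) summable_on {(j,k). j \<notin> \<sigma> \<and> k \<in> Q j})"
    unfolding cmp(1) split_sum(1)[of c \<sigma>] cL cO pL(1) pO(1) by simp
  assume ds: "d summable_on UNIV"
  hence cs: "c summable_on UNIV" using cmp(1) by simp
  hence cs2: "c summable_on \<sigma>" "c summable_on (- \<sigma>)" using split_sum(1) by blast+
  have "infsum c UNIV = infsum (\<lambda>(j,k). gL j k) {(j,k). j \<in> \<sigma> \<and> k \<in> I j} + infsum (\<lambda>(j,k). gO j k) {(j,k). j \<notin> \<sigma> \<and> k \<in> Q j}"
  proof -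
    have "infsum c UNIV = infsum c \<sigma> + infsum c (- \<sigma>)" by (rule split_sum(2)[OF cs])
    also have "\<dots> = infsum (\<lambda>j. infsum (gL j) (I j)) \<sigma> + infsum (\<lambda>j. infsum (gO j) (Q j)) (- \<sigma>)"
      unfolding iL iO ..
    finally show ?thesis using pL(2) pO(2) cs2 cL cO by simp
  qed
  thus "m * infsum d UNIV \<le> infsum (\<lambda>(j,k). gL j k) {(j,k). j \<in> \<sigma> \<and> k \<in> I j} + infsum (\<lambda>(j,k). gO j k) {(j,k). j \<notin> \<sigma> \<and> k \<in> Q j} \<and>
          infsum (\<lambda>(j,k). gL j k) {(j,k). j \<in> \<sigma> \<and> k \<in> I j} + infsum (\<lambda>(j,k). gO j k) {(j,k). j \<notin> \<sigma> \<and> k \<in> Q j}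
            \<le> Mx * infsum d UNIV"
    using cmp(2)[OF cs] by simp
qed



lemma bounded_clinear_comp:
  assumes A: "bounded_clinear A" and B: "bounded_clinear B"
  shows "bounded_clinear (\<lambda>x. A (B x))"
proof -
  obtain MA where MA: "MA > 0" "\<And>x. norm (A x) \<le> MA * norm x" using bounded_clinear_pos_bound[OF A] by metis
  obtain MB where MB: "MB > 0" "\<And>x. norm (B x) \<le> MB * norm x" using bounded_clinear_pos_bound[OF B] by metis
  have AL: "clinear A" and BL: "clinear B" using A B by (simp_all add: bounded_clinear_clinear)
  have "norm (A (B x)) \<le> (MA * MB) * norm x" for x
    using order_trans[OF MA(2)[of "B x"] mult_left_mono[OF MB(2)[of x]]] MA(1) by (simp add: mult.assoc)
  thus ?thesis using AL BL unfolding bounded_clinear_def clinear_def by auto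
qed

lemma key_identity:
  fixes R C C' :: "'h::chilbert_space \<Rightarrow> 'h" and G :: "'h \<Rightarrow> 'k::chilbert_space"
  assumes R: "positive_op R" and C: "positive_op C" and C': "positive_op C'"
    and comm: "C \<circ> C' = C' \<circ> C" and R_sq: "R \<circ> R = C \<circ> C'"
    and a: "a > 0" "\<And>y. a * norm y \<le> norm (R y)"
    and G: "bounded_clinear G"
    and cm: "C \<circ> (adj G \<circ> G) = (adj G \<circ> G) \<circ> C \<and> C' \<circ> (adj G \<circ> G) = (adj G \<circ> G) \<circ> C'"
  shows "cinner (G (C f)) (G (C' f)) = of_real ((norm (G (R f)))\<^sup>2)"
proof -
  define T where "T = (\<lambda>x. adj G (G x))"
  have TB: "bounded_clinear T" unfolding T_def by (rule bounded_clinear_comp[OF adj_bounded_clinear[OF G] G])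
  have cC: "C (T x) = T (C x)" for x using fun_cong[OF conjunct1[OF cm], of x] by (simp add: T_def)
  have cC': "C' (T x) = T (C' x)" for x using fun_cong[OF conjunct2[OF cm], of x] by (simp add: T_def)
  have rr: "R (R x) = C (C' x)" for x using fun_cong[OF R_sq, of x] by simp
  have cc: "C' (C x) = C (C' x)" for x using fun_cong[OF comm, of x] by simp
  have comm2: "T (R (R x)) = R (R (T x))" for x
    unfolding rr by (simp add: cC[symmetric] cC'[symmetric])
  have sy: "T (R x) = R (T x)" for x by (rule sylvester_zero[OF R a TB comm2])
  have "cinner (G (C f)) (G (C' f)) = cinner (C f) (T (C' f))" unfolding T_def by (rule adj_prop[OF G])
  also have "\<dots> = cinner (C f) (C' (T f))" by (simp add: cC')
  also have "\<dots> = cinner (C' (C f)) (T f)" by (rule positive_op_hermitian[OF C', symmetric])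
  also have "\<dots> = cinner (R (R f)) (T f)" by (simp add: cc rr)
  also have "\<dots> = cinner (R f) (R (T f))" by (rule positive_op_hermitian[OF R])
  also have "\<dots> = cinner (R f) (T (R f))" by (simp add: sy)
  also have "\<dots> = cinner (G (R f)) (G (R f))" unfolding T_def by (rule adj_prop[OF G, symmetric])
  also have "\<dots> = of_real ((norm (G (R f)))\<^sup>2)" by (rule cinner_self_norm)
  finally show ?thesis .
qed

lemma frame_identity:
  assumes R: "positive_op R" and G: "bounded_clinear G"
  shows "cinner f (R (adj G v)) = cinner (G (R f)) v"
  by (simp add: positive_op_hermitian[OF R, symmetric] adj_prop[OF G])

lemma GL_lower:
  fixes R C C' :: "'h::chilbert_space \<Rightarrow> 'h"
  assumes C: "GL_plus C" and C': "GL_plus C'" and R: "positive_op R" and R_sq: "R \<circ> R = C \<circ> C'"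
  obtains a where "a > 0" "\<And>y. a * norm y \<le> norm (R y)"
proof -
  obtain S where S: "bounded_clinear S" "S \<circ> C = id" using C unfolding GL_plus_def by blast
  obtain S' where S': "bounded_clinear S'" "S' \<circ> C' = id" using C' unfolding GL_plus_def by blast
  have RB: "bounded_clinear R" using R unfolding positive_op_def by simp
  obtain MS where MS: "MS > 0" "\<And>x. norm (S x) \<le> MS * norm x" using bounded_clinear_pos_bound[OF S(1)] by metis
  obtain MS' where MS': "MS' > 0" "\<And>x. norm (S' x) \<le> MS' * norm x" using bounded_clinear_pos_bound[OF S'(1)] by metis
  obtain MR where MR: "MR > 0" "\<And>x. norm (R x) \<le> MR * norm x" using bounded_clinear_pos_bound[OF RB] by metis
  define a where "a = 1 / (MS' * MS * MR)"
  have apos: "a > 0" unfolding a_def using MS MS' MR by simp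
  have "a * norm y \<le> norm (R y)" for y
  proof -
    have "y = S' (S (C (C' y)))" using fun_cong[OF S(2), of "C' y"] fun_cong[OF S'(2), of y] by simp
    also have "C (C' y) = R (R y)" using fun_cong[OF R_sq, of y] by simp
    finally have yeq: "y = S' (S (R (R y)))" .
    have "norm y \<le> MS' * norm (S (R (R y)))" using MS'(2) yeq by metis
    also have "\<dots> \<le> MS' * (MS * norm (R (R y)))" using MS(2) MS'(1) by (simp add: mult_left_mono)
    also have "\<dots> \<le> MS' * (MS * (MR * norm (R y)))" using MR(2) MS'(1) MS(1) by (simp add: mult_left_mono)
    finally have "norm y \<le> (MS' * MS * MR) * norm (R y)" by (simp add: mult.assoc)
    thus ?thesis unfolding a_def using MS MS' MR by (simp add: field_simps)
  qed
  thus ?thesis using that apos by blast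
qed



theorem mainTheorem4:
  fixes K C C' R :: "'h::chilbert_space \<Rightarrow> 'h"
    and \<Lambda> :: "nat \<Rightarrow> 'h \<Rightarrow> 'k1::chilbert_space" and HH :: "nat \<Rightarrow> 'k1 set"
    and \<Omega> :: "nat \<Rightarrow> 'h \<Rightarrow> 'k2::chilbert_space" and WW :: "nat \<Rightarrow> 'k2 set"
    and fr :: "nat \<Rightarrow> nat \<Rightarrow> 'k1" and I :: "nat \<Rightarrow> nat set"
    and gr :: "nat \<Rightarrow> nat \<Rightarrow> 'k2" and Q :: "nat \<Rightarrow> nat set"
    and \<alpha> \<beta> \<alpha>' \<beta>' :: real
  assumes sep: "separable_space TYPE('h)"
    and K: "bounded_clinear K"
    and C: "GL_plus C" and C': "GL_plus C'"
    and HH: "\<And>j. closed_csubspace (HH j)" and WW: "\<And>j. closed_csubspace (WW j)"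
    and \<Lambda>: "\<And>j. bounded_clinear (\<Lambda> j) \<and> range (\<Lambda> j) \<subseteq> HH j"
    and \<Omega>: "\<And>j. bounded_clinear (\<Omega> j) \<and> range (\<Omega> j) \<subseteq> WW j"
    and comm: "C \<circ> C' = C' \<circ> C"
    and commL: "\<And>j. C \<circ> (adj (\<Lambda> j) \<circ> \<Lambda> j) = (adj (\<Lambda> j) \<circ> \<Lambda> j) \<circ> C \<and>
                     C' \<circ> (adj (\<Lambda> j) \<circ> \<Lambda> j) = (adj (\<Lambda> j) \<circ> \<Lambda> j) \<circ> C'"
    and commO: "\<And>j. C \<circ> (adj (\<Omega> j) \<circ> \<Omega> j) = (adj (\<Omega> j) \<circ> \<Omega> j) \<circ> C \<and>
                     C' \<circ> (adj (\<Omega> j) \<circ> \<Omega> j) = (adj (\<Omega> j) \<circ> \<Omega> j) \<circ> C'"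
    and R: "positive_op R" and R_sq: "R \<circ> R = C \<circ> C'"
    and frameL: "ctrl_Kg_frame K C C' \<Lambda>" and frameO: "ctrl_Kg_frame K C C' \<Omega>"
    and fr: "\<And>j. frame_for (HH j) (fr j) (I j) \<alpha> \<beta>"
    and gr: "\<And>j. frame_for (WW j) (gr j) (Q j) \<alpha>' \<beta>'"
  shows "ctrl_Kg_woven K C C' \<Lambda> \<Omega> \<longleftrightarrow>
         woven_K_frames K (\<lambda>j k. R (adj (\<Lambda> j) (fr j k))) I (\<lambda>j k. R (adj (\<Omega> j) (gr j k))) Q"

proof -
  obtain a where a: "a > 0" "\<And>y. a * norm y \<le> norm (R y)" using GL_lower[OF C C' R R_sq] by blast
  have Cp: "positive_op C" "positive_op C'" using C C' unfolding GL_plus_def by auto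
  have LB: "\<And>j. bounded_clinear (\<Lambda> j)" using \<Lambda> by blast
  have OB: "\<And>j. bounded_clinear (\<Omega> j)" using \<Omega> by blast
  have keyL: "cinner (\<Lambda> j (C f)) (\<Lambda> j (C' f)) = of_real ((norm (\<Lambda> j (R f)))\<^sup>2)" for j f
    by (rule key_identity[OF R Cp comm R_sq a LB commL])
  have keyO: "cinner (\<Omega> j (C f)) (\<Omega> j (C' f)) = of_real ((norm (\<Omega> j (R f)))\<^sup>2)" for j f
    by (rule key_identity[OF R Cp comm R_sq a OB commO])
  have frL: "cinner f (R (adj (\<Lambda> j) v)) = cinner (\<Lambda> j (R f)) v" for j f v
    by (rule frame_identity[OF R LB])
  have frO: "cinner f (R (adj (\<Omega> j) v)) = cinner (\<Omega> j (R f)) v" for j f v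
    by (rule frame_identity[OF R OB])
  have pos: "\<alpha> > 0" "\<beta> > 0" "\<alpha>' > 0" "\<beta>' > 0" using fr[of 0] gr[of 0] unfolding frame_for_def by auto
  have FL: "(\<lambda>k. (cmod (cinner f (R (adj (\<Lambda> j) (fr j k)))))\<^sup>2) summable_on I j \<and>
      \<alpha> * (norm (\<Lambda> j (R f)))\<^sup>2 \<le> infsum (\<lambda>k. (cmod (cinner f (R (adj (\<Lambda> j) (fr j k)))))\<^sup>2) (I j) \<and>
      infsum (\<lambda>k. (cmod (cinner f (R (adj (\<Lambda> j) (fr j k)))))\<^sup>2) (I j) \<le> \<beta> * (norm (\<Lambda> j (R f)))\<^sup>2" for j f
  proof -
    have "\<Lambda> j (R f) \<in> HH j" using \<Lambda>[of j] by blast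
    thus ?thesis using fr[of j] unfolding frame_for_def frL by blast
  qed
  have FO: "(\<lambda>k. (cmod (cinner f (R (adj (\<Omega> j) (gr j k)))))\<^sup>2) summable_on Q j \<and>
      \<alpha>' * (norm (\<Omega> j (R f)))\<^sup>2 \<le> infsum (\<lambda>k. (cmod (cinner f (R (adj (\<Omega> j) (gr j k)))))\<^sup>2) (Q j) \<and>
      infsum (\<lambda>k. (cmod (cinner f (R (adj (\<Omega> j) (gr j k)))))\<^sup>2) (Q j) \<le> \<beta>' * (norm (\<Omega> j (R f)))\<^sup>2" for j f
  proof -
    have "\<Omega> j (R f) \<in> WW j" using \<Omega>[of j] by blast
    thus ?thesis using gr[of j] unfolding frame_for_def frO by blast
  qed
  have PS: "((\<lambda>j. if j \<in> \<sigma> then cinner (\<Lambda> j (C f)) (\<Lambda> j (C' f)) else cinner (\<Omega> j (C f)) (\<Omega> j (C' f))) summable_on UNIV \<longleftrightarrow> ((\<lambda>(j,k). (cmod (cinner f (R (adj (\<Lambda> j) (fr j k)))))\<^sup>2) summable_on {(j,k). j \<in> \<sigma> \<and> k \<in> I j} \<and> (\<lambda>(j,k). (cmod (cinner f (R (adj (\<Omega> j) (gr j k)))))\<^sup>2) summable_on {(j,k). j \<notin> \<sigma> \<and> k \<in> Q j})) \<and>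
     ((\<lambda>j. if j \<in> \<sigma> then cinner (\<Lambda> j (C f)) (\<Lambda> j (C' f)) else cinner (\<Omega> j (C f)) (\<Omega> j (C' f))) summable_on UNIV \<longrightarrow> min \<alpha> \<alpha>' * Re (infsum (\<lambda>j. if j \<in> \<sigma> then cinner (\<Lambda> j (C f)) (\<Lambda> j (C' f)) else cinner (\<Omega> j (C f)) (\<Omega> j (C' f))) UNIV) \<le> (infsum (\<lambda>(j,k). (cmod (cinner f (R (adj (\<Lambda> j) (fr j k)))))\<^sup>2) {(j,k). j \<in> \<sigma> \<and> k \<in> I j} + infsum (\<lambda>(j,k). (cmod (cinner f (R (adj (\<Omega> j) (gr j k)))))\<^sup>2) {(j,k). j \<notin> \<sigma> \<and> k \<in> Q j}) \<and> (infsum (\<lambda>(j,k). (cmod (cinner f (R (adj (\<Lambda> j) (fr j k)))))\<^sup>2) {(j,k). j \<in> \<sigma> \<and> k \<in> I j} + infsum (\<lambda>(j,k). (cmod (cinner f (R (adj (\<Omega> j) (gr j k)))))\<^sup>2) {(j,k). j \<notin> \<sigma> \<and> k \<in> Q j}) \<le> max \<beta> \<beta>' * Re (infsum (\<lambda>j. if j \<in> \<sigma> then cinner (\<Lambda> j (C f)) (\<Lambda> j (C' f)) else cinner (\<Omega> j (C f)) (\<Omega> j (C' f))) UNIV))" for \<sigma> f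
  proof -
    define d where "d = (\<lambda>j. if j \<in> \<sigma> then (norm (\<Lambda> j (R f)))\<^sup>2 else (norm (\<Omega> j (R f)))\<^sup>2)"
    have teq: "(\<lambda>j. if j \<in> \<sigma> then cinner (\<Lambda> j (C f)) (\<Lambda> j (C' f)) else cinner (\<Omega> j (C f)) (\<Omega> j (C' f))) = (\<lambda>j. of_real (d j))" by (rule ext) (simp add: d_def keyL keyO)
    have ts: "(\<lambda>j. if j \<in> \<sigma> then cinner (\<Lambda> j (C f)) (\<Lambda> j (C' f)) else cinner (\<Omega> j (C f)) (\<Omega> j (C' f))) summable_on UNIV \<longleftrightarrow> d summable_on UNIV"
    proof
      assume "(\<lambda>j. if j \<in> \<sigma> then cinner (\<Lambda> j (C f)) (\<Lambda> j (C' f)) else cinner (\<Omega> j (C f)) (\<Omega> j (C' f))) summable_on UNIV"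
      hence "(\<lambda>j. Re (of_real (d j) :: complex)) summable_on UNIV" unfolding teq by (rule summable_on_Re)
      thus "d summable_on UNIV" by simp
    next
      assume "d summable_on UNIV"
      thus "(\<lambda>j. if j \<in> \<sigma> then cinner (\<Lambda> j (C f)) (\<Lambda> j (C' f)) else cinner (\<Omega> j (C f)) (\<Omega> j (C' f))) summable_on UNIV" unfolding teq by (rule summable_on_of_real)
    qed
    have tr: "Re (infsum (\<lambda>j. if j \<in> \<sigma> then cinner (\<Lambda> j (C f)) (\<Lambda> j (C' f)) else cinner (\<Omega> j (C f)) (\<Omega> j (C' f))) UNIV) = infsum d UNIV" if "d summable_on UNIV"
    proof -
      have ds: "(\<lambda>j. of_real (d j) :: complex) summable_on UNIV" using that by (rule summable_on_of_real)
      have "Re (infsum (\<lambda>j. of_real (d j) :: complex) UNIV) = infsum (\<lambda>j. Re (of_real (d j) :: complex)) UNIV"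
        by (rule infsum_Re[OF ds, symmetric])
      thus ?thesis unfolding teq by simp
    qed
    note P = per_sigma[where gL = "\<lambda>j k. (cmod (cinner f (R (adj (\<Lambda> j) (fr j k)))))\<^sup>2"
        and gO = "\<lambda>j k. (cmod (cinner f (R (adj (\<Omega> j) (gr j k)))))\<^sup>2"
        and aL = "\<lambda>j. (norm (\<Lambda> j (R f)))\<^sup>2" and bO = "\<lambda>j. (norm (\<Omega> j (R f)))\<^sup>2"
        and I = I and Q = Q and \<alpha> = \<alpha> and \<beta> = \<beta> and \<alpha>' = \<alpha>' and \<beta>' = \<beta>' and \<sigma> = \<sigma>]
    have P1: "d summable_on UNIV \<longleftrightarrow> ((\<lambda>(j,k). (cmod (cinner f (R (adj (\<Lambda> j) (fr j k)))))\<^sup>2) summable_on {(j,k). j \<in> \<sigma> \<and> k \<in> I j} \<and> (\<lambda>(j,k). (cmod (cinner f (R (adj (\<Omega> j) (gr j k)))))\<^sup>2) summable_on {(j,k). j \<notin> \<sigma> \<and> k \<in> Q j})"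
      unfolding d_def by (rule P(1)) (use FL FO pos in auto)
    have P2: "d summable_on UNIV \<Longrightarrow> min \<alpha> \<alpha>' * infsum d UNIV \<le> (infsum (\<lambda>(j,k). (cmod (cinner f (R (adj (\<Lambda> j) (fr j k)))))\<^sup>2) {(j,k). j \<in> \<sigma> \<and> k \<in> I j} + infsum (\<lambda>(j,k). (cmod (cinner f (R (adj (\<Omega> j) (gr j k)))))\<^sup>2) {(j,k). j \<notin> \<sigma> \<and> k \<in> Q j}) \<and> (infsum (\<lambda>(j,k). (cmod (cinner f (R (adj (\<Lambda> j) (fr j k)))))\<^sup>2) {(j,k). j \<in> \<sigma> \<and> k \<in> I j} + infsum (\<lambda>(j,k). (cmod (cinner f (R (adj (\<Omega> j) (gr j k)))))\<^sup>2) {(j,k). j \<notin> \<sigma> \<and> k \<in> Q j}) \<le> max \<beta> \<beta>' * infsum d UNIV"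
      unfolding d_def by (rule P(2)) (use FL FO pos in auto)
    show ?thesis using P1 P2 ts tr by simp
  qed
  show ?thesis
  proof
    assume "ctrl_Kg_woven K C C' \<Lambda> \<Omega>"
    then obtain A B where AB: "0 < A" "A \<le> B" and W: "\<And>\<sigma>. ctrl_Kg_ineq K A B (\<lambda>f j. if j \<in> \<sigma> then cinner (\<Lambda> j (C f)) (\<Lambda> j (C' f))
                                       else cinner (\<Omega> j (C f)) (\<Omega> j (C' f)))"
      unfolding ctrl_Kg_woven_def by blast
    define D1 where "D1 = A * min \<alpha> \<alpha>'"
    define D2 where "D2 = max (B * max \<beta> \<beta>') D1"
    show "woven_K_frames K (\<lambda>j k. R (adj (\<Lambda> j) (fr j k))) I (\<lambda>j k. R (adj (\<Omega> j) (gr j k))) Q"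
      unfolding woven_K_frames_def
    proof (rule exI[of _ D1], rule exI[of _ D2], intro conjI allI)
      show "0 < D1" using AB pos by (simp add: D1_def)
      show "D1 \<le> D2" by (simp add: D2_def)
      fix \<sigma> f
      have w: "(\<lambda>j. if j \<in> \<sigma> then cinner (\<Lambda> j (C f)) (\<Lambda> j (C' f)) else cinner (\<Omega> j (C f)) (\<Omega> j (C' f))) summable_on UNIV" "A * (norm (adj K f))\<^sup>2 \<le> Re (infsum (\<lambda>j. if j \<in> \<sigma> then cinner (\<Lambda> j (C f)) (\<Lambda> j (C' f)) else cinner (\<Omega> j (C f)) (\<Omega> j (C' f))) UNIV)"
        "Re (infsum (\<lambda>j. if j \<in> \<sigma> then cinner (\<Lambda> j (C f)) (\<Lambda> j (C' f)) else cinner (\<Omega> j (C f)) (\<Omega> j (C' f))) UNIV) \<le> B * (norm f)\<^sup>2"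
        using W[of \<sigma>] unfolding ctrl_Kg_ineq_def by auto
      have ps: "(\<lambda>(j,k). (cmod (cinner f (R (adj (\<Lambda> j) (fr j k)))))\<^sup>2) summable_on {(j,k). j \<in> \<sigma> \<and> k \<in> I j}" "(\<lambda>(j,k). (cmod (cinner f (R (adj (\<Omega> j) (gr j k)))))\<^sup>2) summable_on {(j,k). j \<notin> \<sigma> \<and> k \<in> Q j}"
        "min \<alpha> \<alpha>' * Re (infsum (\<lambda>j. if j \<in> \<sigma> then cinner (\<Lambda> j (C f)) (\<Lambda> j (C' f)) else cinner (\<Omega> j (C f)) (\<Omega> j (C' f))) UNIV) \<le> (infsum (\<lambda>(j,k). (cmod (cinner f (R (adj (\<Lambda> j) (fr j k)))))\<^sup>2) {(j,k). j \<in> \<sigma> \<and> k \<in> I j} + infsum (\<lambda>(j,k). (cmod (cinner f (R (adj (\<Omega> j) (gr j k)))))\<^sup>2) {(j,k). j \<notin> \<sigma> \<and> k \<in> Q j})" "(infsum (\<lambda>(j,k). (cmod (cinner f (R (adj (\<Lambda> j) (fr j k)))))\<^sup>2) {(j,k). j \<in> \<sigma> \<and> k \<in> I j} + infsum (\<lambda>(j,k). (cmod (cinner f (R (adj (\<Omega> j) (gr j k)))))\<^sup>2) {(j,k). j \<notin> \<sigma> \<and> k \<in> Q j}) \<le> max \<beta> \<beta>' * Re (infsum (\<lambda>j. if j \<in> \<sigma> then cinner (\<Lambda> j (C f)) (\<Lambda> j (C' f)) else cinner (\<Omega> j (C f)) (\<Omega> j (C' f))) UNIV)"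
        using PS[of \<sigma> f] w(1) by auto
      show "(\<lambda>(j,k). (cmod (cinner f (R (adj (\<Lambda> j) (fr j k)))))\<^sup>2) summable_on {(j,k). j \<in> \<sigma> \<and> k \<in> I j}" "(\<lambda>(j,k). (cmod (cinner f (R (adj (\<Omega> j) (gr j k)))))\<^sup>2) summable_on {(j,k). j \<notin> \<sigma> \<and> k \<in> Q j}" by (fact ps(1)) (fact ps(2))
      have m0: "min \<alpha> \<alpha>' > 0" using pos by simp
      have "D1 * (norm (adj K f))\<^sup>2 = min \<alpha> \<alpha>' * (A * (norm (adj K f))\<^sup>2)" unfolding D1_def by simp
      also have "\<dots> \<le> min \<alpha> \<alpha>' * Re (infsum (\<lambda>j. if j \<in> \<sigma> then cinner (\<Lambda> j (C f)) (\<Lambda> j (C' f)) else cinner (\<Omega> j (C f)) (\<Omega> j (C' f))) UNIV)" using w(2) m0 by (simp add: mult_left_mono)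
      also have "\<dots> \<le> (infsum (\<lambda>(j,k). (cmod (cinner f (R (adj (\<Lambda> j) (fr j k)))))\<^sup>2) {(j,k). j \<in> \<sigma> \<and> k \<in> I j} + infsum (\<lambda>(j,k). (cmod (cinner f (R (adj (\<Omega> j) (gr j k)))))\<^sup>2) {(j,k). j \<notin> \<sigma> \<and> k \<in> Q j})" by (fact ps(3))
      finally show "D1 * (norm (adj K f))\<^sup>2 \<le> (infsum (\<lambda>(j,k). (cmod (cinner f (R (adj (\<Lambda> j) (fr j k)))))\<^sup>2) {(j,k). j \<in> \<sigma> \<and> k \<in> I j} + infsum (\<lambda>(j,k). (cmod (cinner f (R (adj (\<Omega> j) (gr j k)))))\<^sup>2) {(j,k). j \<notin> \<sigma> \<and> k \<in> Q j})" .
      have M0: "max \<beta> \<beta>' > 0" using pos by simp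
      have "(infsum (\<lambda>(j,k). (cmod (cinner f (R (adj (\<Lambda> j) (fr j k)))))\<^sup>2) {(j,k). j \<in> \<sigma> \<and> k \<in> I j} + infsum (\<lambda>(j,k). (cmod (cinner f (R (adj (\<Omega> j) (gr j k)))))\<^sup>2) {(j,k). j \<notin> \<sigma> \<and> k \<in> Q j}) \<le> max \<beta> \<beta>' * Re (infsum (\<lambda>j. if j \<in> \<sigma> then cinner (\<Lambda> j (C f)) (\<Lambda> j (C' f)) else cinner (\<Omega> j (C f)) (\<Omega> j (C' f))) UNIV)" by (fact ps(4))
      also have "\<dots> \<le> max \<beta> \<beta>' * (B * (norm f)\<^sup>2)" using w(3) M0 by (simp add: mult_left_mono)
      also have "\<dots> = (B * max \<beta> \<beta>') * (norm f)\<^sup>2" by simp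
      also have "\<dots> \<le> D2 * (norm f)\<^sup>2" unfolding D2_def by (simp add: mult_right_mono)
      finally show "(infsum (\<lambda>(j,k). (cmod (cinner f (R (adj (\<Lambda> j) (fr j k)))))\<^sup>2) {(j,k). j \<in> \<sigma> \<and> k \<in> I j} + infsum (\<lambda>(j,k). (cmod (cinner f (R (adj (\<Omega> j) (gr j k)))))\<^sup>2) {(j,k). j \<notin> \<sigma> \<and> k \<in> Q j}) \<le> D2 * (norm f)\<^sup>2" .
    qed
  next
    assume "woven_K_frames K (\<lambda>j k. R (adj (\<Lambda> j) (fr j k))) I (\<lambda>j k. R (adj (\<Omega> j) (gr j k))) Q"
    then obtain D1 D2 where D: "0 < D1" "D1 \<le> D2" and Wv: "\<And>\<sigma> f. (\<lambda>(j,k). (cmod (cinner f (R (adj (\<Lambda> j) (fr j k)))))\<^sup>2) summable_on {(j,k). j \<in> \<sigma> \<and> k \<in> I j} \<and> (\<lambda>(j,k). (cmod (cinner f (R (adj (\<Omega> j) (gr j k)))))\<^sup>2) summable_on {(j,k). j \<notin> \<sigma> \<and> k \<in> Q j} \<and>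
        D1 * (norm (adj K f))\<^sup>2 \<le> (infsum (\<lambda>(j,k). (cmod (cinner f (R (adj (\<Lambda> j) (fr j k)))))\<^sup>2) {(j,k). j \<in> \<sigma> \<and> k \<in> I j} + infsum (\<lambda>(j,k). (cmod (cinner f (R (adj (\<Omega> j) (gr j k)))))\<^sup>2) {(j,k). j \<notin> \<sigma> \<and> k \<in> Q j}) \<and> (infsum (\<lambda>(j,k). (cmod (cinner f (R (adj (\<Lambda> j) (fr j k)))))\<^sup>2) {(j,k). j \<in> \<sigma> \<and> k \<in> I j} + infsum (\<lambda>(j,k). (cmod (cinner f (R (adj (\<Omega> j) (gr j k)))))\<^sup>2) {(j,k). j \<notin> \<sigma> \<and> k \<in> Q j}) \<le> D2 * (norm f)\<^sup>2"
      unfolding woven_K_frames_def by blast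
    define A where "A = D1 / max \<beta> \<beta>'"
    define B where "B = max (D2 / min \<alpha> \<alpha>') A"
    have m0: "min \<alpha> \<alpha>' > 0" and M0: "max \<beta> \<beta>' > 0" using pos by auto
    show "ctrl_Kg_woven K C C' \<Lambda> \<Omega>" unfolding ctrl_Kg_woven_def
    proof (rule exI[of _ A], rule exI[of _ B], intro conjI allI)
      show "0 < A" unfolding A_def using D M0 by simp
      show "A \<le> B" unfolding B_def by simp
      fix \<sigma>
      show "ctrl_Kg_ineq K A B (\<lambda>f j. if j \<in> \<sigma> then cinner (\<Lambda> j (C f)) (\<Lambda> j (C' f))
                                       else cinner (\<Omega> j (C f)) (\<Omega> j (C' f)))"
        unfolding ctrl_Kg_ineq_def
      proof (intro allI conjI)
        fix f
        have wv: "(\<lambda>(j,k). (cmod (cinner f (R (adj (\<Lambda> j) (fr j k)))))\<^sup>2) summable_on {(j,k). j \<in> \<sigma> \<and> k \<in> I j}" "(\<lambda>(j,k). (cmod (cinner f (R (adj (\<Omega> j) (gr j k)))))\<^sup>2) summable_on {(j,k). j \<notin> \<sigma> \<and> k \<in> Q j}" "D1 * (norm (adj K f))\<^sup>2 \<le> (infsum (\<lambda>(j,k). (cmod (cinner f (R (adj (\<Lambda> j) (fr j k)))))\<^sup>2) {(j,k). j \<in> \<sigma> \<and> k \<in> I j} + infsum (\<lambda>(j,k). (cmod (cinner f (R (adj (\<Omega> j) (gr j k)))))\<^sup>2) {(j,k). j \<notin> \<sigma> \<and> k \<in> Q j})" "(infsum (\<lambda>(j,k). (cmod (cinner f (R (adj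 (\<Lambda> j) (fr j k)))))\<^sup>2) {(j,k). j \<in> \<sigma> \<and> k \<in> I j} + infsum (\<lambda>(j,k). (cmod (cinner f (R (adj (\<Omega> j) (gr j k)))))\<^sup>2) {(j,k). j \<notin> \<sigma> \<and> k \<in> Q j}) \<le> D2 * (norm f)\<^sup>2"
          using Wv[where \<sigma>=\<sigma> and f=f] by auto
        have ts: "(\<lambda>j. if j \<in> \<sigma> then cinner (\<Lambda> j (C f)) (\<Lambda> j (C' f)) else cinner (\<Omega> j (C f)) (\<Omega> j (C' f))) summable_on UNIV" using PS[of \<sigma> f] wv(1,2) by blast
        have ps: "min \<alpha> \<alpha>' * Re (infsum (\<lambda>j. if j \<in> \<sigma> then cinner (\<Lambda> j (C f)) (\<Lambda> j (C' f)) else cinner (\<Omega> j (C f)) (\<Omega> j (C' f))) UNIV) \<le> (infsum (\<lambda>(j,k). (cmod (cinner f (R (adj (\<Lambda> j) (fr j k)))))\<^sup>2) {(j,k). j \<in> \<sigma> \<and> k \<in> I j} + infsum (\<lambda>(j,k). (cmod (cinner f (R (adj (\<Omega> j) (gr j k)))))\<^sup>2) {(j,k). j \<notin> \<sigma> \<and> k \<in> Q j})" "(infsum (\<lambda>(j,k). (cmod (cinner f (R (adj (\<Lambda> j) (fr j k)))))\<^sup>2) {(j,k). j \<in> \<sigma> \<and> k \<in> I j} + infsum (\<lambda>(j,k). (cmod (cinner f (R (adj (\<Omega> j) (gr j k)))))\<^sup>2) {(j,k). j \<notin> \<sigma> \<and> k \<in> Q j}) \<le> max \<beta> \<beta>'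 * Re (infsum (\<lambda>j. if j \<in> \<sigma> then cinner (\<Lambda> j (C f)) (\<Lambda> j (C' f)) else cinner (\<Omega> j (C f)) (\<Omega> j (C' f))) UNIV)"
          using PS[of \<sigma> f] ts by auto
        show "(\<lambda>j. if j \<in> \<sigma> then cinner (\<Lambda> j (C f)) (\<Lambda> j (C' f)) else cinner (\<Omega> j (C f)) (\<Omega> j (C' f))) summable_on UNIV" by (fact ts)
        have "D1 * (norm (adj K f))\<^sup>2 \<le> max \<beta> \<beta>' * Re (infsum (\<lambda>j. if j \<in> \<sigma> then cinner (\<Lambda> j (C f)) (\<Lambda> j (C' f)) else cinner (\<Omega> j (C f)) (\<Omega> j (C' f))) UNIV)" using wv(3) ps(2) by linarith
        hence "D1 * (norm (adj K f))\<^sup>2 / max \<beta> \<beta>' \<le> Re (infsum (\<lambda>j. if j \<in> \<sigma> then cinner (\<Lambda> j (C f)) (\<Lambda> j (C' f)) else cinner (\<Omega> j (C f)) (\<Omega> j (C' f))) UNIV)" using M0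
          by (simp add: divide_le_eq mult.commute)
        thus "A * (norm (adj K f))\<^sup>2 \<le> Re (infsum (\<lambda>j. if j \<in> \<sigma> then cinner (\<Lambda> j (C f)) (\<Lambda> j (C' f)) else cinner (\<Omega> j (C f)) (\<Omega> j (C' f))) UNIV)" unfolding A_def by simp
        have "min \<alpha> \<alpha>' * Re (infsum (\<lambda>j. if j \<in> \<sigma> then cinner (\<Lambda> j (C f)) (\<Lambda> j (C' f)) else cinner (\<Omega> j (C f)) (\<Omega> j (C' f))) UNIV) \<le> D2 * (norm f)\<^sup>2" using wv(4) ps(1) by linarith
        hence "Re (infsum (\<lambda>j. if j \<in> \<sigma> then cinner (\<Lambda> j (C f)) (\<Lambda> j (C' f)) else cinner (\<Omega> j (C f)) (\<Omega> j (C' f))) UNIV) \<le> D2 * (norm f)\<^sup>2 / min \<alpha> \<alpha>'" using m0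
          by (simp add: le_divide_eq mult.commute)
        also have "\<dots> = (D2 / min \<alpha> \<alpha>') * (norm f)\<^sup>2" by simp
        also have "\<dots> \<le> B * (norm f)\<^sup>2" unfolding B_def by (rule mult_right_mono) simp_all
        finally show "Re (infsum (\<lambda>j. if j \<in> \<sigma> then cinner (\<Lambda> j (C f)) (\<Lambda> j (C' f)) else cinner (\<Omega> j (C f)) (\<Omega> j (C' f))) UNIV) \<le> B * (norm f)\<^sup>2" .
      qed
    qed
  qed
qed


end
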